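(* Let $V=\mathbb{C}^6$ and let $\pi\subset\mathbb{P}(\wedge^2V)$ be a projective plane all of whose points have rank exactly four. If every line contained in $\pi$ is special, then there is a hyperplane $H\subset V$ such that $\pi\subset\mathbb{P}(\wedge^2H)$ (i.e. $\pi$ is contained in the linear span of a sub-Grassmannian $\mathbb{G}(1,4)\subset\mathbb{G}(1,5)$).
   Context: Elements of $\wedge^2\mathbb{C}^6$ are identified with skew-symmetric $6\times6$ matrices; rank means matrix rank. Fix a basis $e_0,\dots,e_5$ of $V$. A projective line in $\mathbb{P}(\wedge^2V)$ all of whose points have rank four is called special if it is $PGL_6$-equivalent to the line spanned by $e_0\wedge e_2+e_1\wedge e_3$ and $e_0\wedge e_4+e_1\wedge e_2$. Work over $\mathbb{C}$. *)

theory Defs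
  imports "HOL-Analysis.Analysis"
begin

text \<open>Elements of wedge^2 C^6 are identified with skew-symmetric 6x6 complex matrices;
  u wedge v corresponds to the matrix u v^T - v u^T.\<close>

type_synonym cvec6 = "complex ^ 6"
type_synonym cmat6 = "complex ^ 6 ^ 6"

definition skew :: "cmat6 \<Rightarrow> bool" where
  "skew A \<longleftrightarrow> transpose A = - A"

definition wedge :: "cvec6 \<Rightarrow> cvec6 \<Rightarrow> cmat6" where
  "wedge u v = (\<chi> i j. u $ i * v $ j - v $ i * u $ j)"

definition smat :: "complex \<Rightarrow> cmat6 \<Rightarrow> cmat6" where
  "smat c A = (\<chi> i j. c * A $ i $ j)"

definition cspan :: "cmat6 set \<Rightarrow> cmat6 set" where
  "cspan S = {X. \<exists>F c. finite F \<and> F \<subseteq> S \<and> X = (\<Sum>Y\<in>F. smat (c Y) Y)}"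

definition wedge2 :: "cvec6 set \<Rightarrow> cmat6 set" where
  "wedge2 H = cspan {wedge u v | u v. u \<in> H \<and> v \<in> H}"

definition e :: "6 \<Rightarrow> cvec6" where
  "e k = axis k 1"

definition special_model :: "cmat6 set" where
  "special_model = cspan {wedge (e 0) (e 2) + wedge (e 1) (e 3),
                          wedge (e 0) (e 4) + wedge (e 1) (e 2)}"

text \<open>A (projective) line, given as a 2-dimensional linear subspace L, is special if it is
  PGL_6-equivalent to the model line; g acts on wedge^2 V by X \<mapsto> g X g^T.\<close>
definition special :: "cmat6 set \<Rightarrow> bool" where
  "special L \<longleftrightarrow> (\<exists>g::cmat6. invertible g \<and>
      (\<lambda>X. g ** X ** transpose g) ` special_model = L)"

end

theory Submission
  imports Defs
begin


lemma exhaust_6: fixes x :: 6 shows "x = 0 \<or> x = 1 \<or> x = 2 \<or> x = 3 \<or> x = 4 \<or> x = 5"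
proof (induct x)
  case (of_int z)
  then have "z = 0 \<or> z = 1 \<or> z = 2 \<or> z = 3 \<or> z = 4 \<or> z = 5" by fastforce
  then show ?case by auto
qed

lemma UNIV_6: "(UNIV::6 set) = {0,1,2,3,4,5}" using exhaust_6 by auto

interpretation msp: vector_space smat
  by unfold_locales (auto simp: smat_def vec_eq_iff algebra_simps)

lemma cspan_eq: "cspan S = msp.span S"
  unfolding cspan_def msp.span_explicit by auto

lemma smat_mv: "smat c X *v y = c *s (X *v y)"
  by (simp add: vec_eq_iff matrix_vector_mult_def smat_def sum_distrib_left mult.assoc)

lemma mv_scale: "(X::cmat6) *v (c *s y) = c *s (X *v y)"
  by (simp add: vec_eq_iff matrix_vector_mult_def sum_distrib_left algebra_simps)

lemma e_comp: "e j $ i = (if i = j then 1 else 0)"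
  by (simp add: e_def axis_def)

lemma e_nz: "e j \<noteq> 0" by (metis e_comp zero_index one_neq_zero)

lemma if_mult1: "(if P then 1 else 0) * (x::complex) = (if P then x else 0)" by simp
lemma if_mult2: "(x::complex) * (if P then 1 else 0) = (if P then x else 0)" by simp

lemma mv_e: "((X::cmat6) *v e j) $ i = X $ i $ j"
  by (simp add: matrix_vector_mult_def e_comp if_mult1 if_mult2)

lemma edot: "(\<Sum>j\<in>UNIV. e b $ j * (y::cvec6) $ j) = y $ b" 
  by (simp add: e_comp if_mult1 if_mult2)

lemma wedge_mv: "wedge u v *v y = (\<Sum>j\<in>UNIV. v$j*y$j) *s u - (\<Sum>j\<in>UNIV. u$j*y$j) *s v"
  by (simp add: vec_eq_iff matrix_vector_mult_def wedge_def sum_subtractf sum_distrib_left algebra_simps)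

lemma wedge_e_mv: "wedge (e a) (e b) *v y = y$b *s e a - y$a *s e b"
  by (simp add: wedge_mv edot)

lemma vec6_expand: "(y::cvec6) = (\<Sum>j\<in>UNIV. y$j *s e j)"
proof -
  have "\<And>i. (\<Sum>j\<in>UNIV. y$j *s e j) $ i = y $ i"
    by (simp add: sum_component e_comp if_mult1 if_mult2)
  then show ?thesis by (simp add: vec_eq_iff)
qed

lemma rank_zero: "rank (0::cmat6) = 0"
proof -
  have "rows (0::cmat6) \<subseteq> {0}" by (auto simp: rows_def row_def vec_eq_iff)
  then show ?thesis unfolding row_rank_def_gen using vec.dim_eq_0 by blast
qed

definition "M1 = wedge (e 0) (e 2) + wedge (e 1) (e 3)"
definition "M2 = wedge (e 0) (e 4) + wedge (e 1) (e 2)"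

lemma model_eq: "special_model = msp.span {M1, M2}"
  unfolding special_model_def cspan_eq M1_def M2_def ..

lemma M_in: "M1 \<in> special_model" "M2 \<in> special_model" "M1 + M2 \<in> special_model"
  unfolding model_eq by (auto intro: msp.span_base msp.span_add)

lemma model_kills: assumes "X \<in> special_model" shows "X *v e 5 = 0"
proof -
  have "msp.span {M1, M2} \<subseteq> {X. X *v e 5 = 0}"
  proof (rule msp.span_minimal)
    show "{M1, M2} \<subseteq> {X. X *v e 5 = 0}"
      by (simp add: M1_def M2_def matrix_vector_mult_add_rdistrib wedge_e_mv e_comp)
    show "msp.subspace {X. X *v e 5 = 0}"
      unfolding msp.subspace_def by (simp add: matrix_vector_mult_add_rdistrib smat_mv)
  qed
  then show ?thesis using assms model_eq by auto
qed

lemma M1_ker: assumes "M1 *v y = 0" shows "y = y$5 *s e 5 + y$4 *s e 4"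
proof -
  have h: "\<And>k. (M1 *v y) $ k = 0" using assms by simp
  have "y$0 = 0" "y$1 = 0" "y$2 = 0" "y$3 = 0"
    using h[of 0] h[of 1] h[of 2] h[of 3]
    by (simp_all add: M1_def matrix_vector_mult_add_rdistrib wedge_e_mv e_comp)
  then show ?thesis
    by (simp add: vec_eq_iff e_comp) (metis exhaust_6)
qed

lemma M2_ker: assumes "M2 *v y = 0" shows "y = y$5 *s e 5 + y$3 *s e 3"
proof -
  have h: "\<And>k. (M2 *v y) $ k = 0" using assms by simp
  have "y$0 = 0" "y$1 = 0" "y$2 = 0" "y$4 = 0"
    using h[of 0] h[of 1] h[of 2] h[of 4]
    by (simp_all add: M2_def matrix_vector_mult_add_rdistrib wedge_e_mv e_comp)
  then show ?thesis
    by (simp add: vec_eq_iff e_comp) (metis exhaust_6)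
qed

lemma M3_ker: assumes "(M1 + M2) *v y = 0" shows "y = y$5 *s e 5 + y$2 *s (e 2 - e 3 - e 4)"
proof -
  have h: "\<And>k. ((M1 + M2) *v y) $ k = 0" using assms by simp
  have "y$0 = 0" "y$1 = 0" "y$2 + y$3 = 0" "y$2 + y$4 = 0"
    using h[of 0] h[of 1] h[of 2] h[of 3] h[of 4]
    by (simp_all add: M1_def M2_def matrix_vector_mult_add_rdistrib wedge_e_mv e_comp algebra_simps)
  then have "y$0 = 0" "y$1 = 0" "y$3 = - y$2" "y$4 = - y$2"
    by (simp_all add: eq_neg_iff_add_eq_0 add.commute)
  then show ?thesis
    by (simp add: vec_eq_iff e_comp) (metis exhaust_6)
qed

lemma M_nz: "M1 \<noteq> 0" "M2 \<noteq> 0" "M1 + M2 \<noteq> 0"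
proof -
  have h: "M1 $ 0 $ 2 = 1" "M2 $ 0 $ 4 = 1" "M2 $ 0 $ 2 = 0"
    by (simp_all add: M1_def M2_def wedge_def e_comp)
  have z: "\<And>X::cmat6. X = 0 \<Longrightarrow> X $ i $ j = 0" for i j by simp
  show "M1 \<noteq> 0" using z[of M1 0 2] h by auto
  show "M2 \<noteq> 0" using z[of M2 0 4] h by auto
  show "M1 + M2 \<noteq> 0"
  proof
    assume a: "M1 + M2 = 0"
    have "(M1 + M2) $ 0 $ 2 = M1 $ 0 $ 2 + M2 $ 0 $ 2" by simp
    also have "\<dots> = 1" using h by simp
    finally show False using a by simp
  qed
qed

lemma phi_kill:
  assumes "transpose g ** G = mat 1" "Y \<in> special_model"
  shows "(g ** Y ** transpose g) *v (G *v e 5) = (0::cvec6)"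
proof -
  have "(g ** Y ** transpose g) *v (G *v e 5) = g *v (Y *v ((transpose g ** G) *v e 5))"
    by (simp add: matrix_vector_mul_assoc matrix_mul_assoc)
  also have "\<dots> = 0" using assms model_kills by simp
  finally show ?thesis .
qed

lemma special_kernel:
  assumes "special L" shows "\<exists>x. x \<noteq> 0 \<and> (\<forall>X\<in>L. X *v x = 0)"
proof -
  obtain g where g: "invertible g" and img: "(\<lambda>X. g ** X ** transpose g) ` special_model = L"
    using assms unfolding special_def by blast
  obtain gi where gi: "g ** gi = mat 1" "gi ** g = mat 1" using g unfolding invertible_def by blast
  have tg: "transpose g ** transpose gi = mat 1"
    by (metis gi(2) matrix_transpose_mul transpose_mat)
  have "transpose gi *v e 5 \<noteq> 0"
  proof
    assume "transpose gi *v e 5 = 0"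
    then have "transpose g *v (transpose gi *v e 5) = 0" by simp
    then have "e 5 = 0" using tg by (metis matrix_vector_mul_assoc matrix_vector_mul_lid)
    then show False using e_nz by blast
  qed
  moreover have "\<forall>X\<in>L. X *v (transpose gi *v e 5) = 0"
    using img phi_kill[OF tg] by auto
  ultimately show ?thesis by blast
qed


lemma skew_entry: assumes "skew C" shows "C $ k $ i = - C $ i $ k"
proof -
  have "(transpose C) $ i $ k = (- C) $ i $ k" using assms unfolding skew_def by simp
  then show ?thesis by (simp add: transpose_def)
qed

lemma mv_neg: "(X::cmat6) *v (- x) = - (X *v x)"
proof -
  have "- x = (-1) *s x" by (simp add: vec_eq_iff)
  then have "X *v (- x) = (-1) *s (X *v x)" by (simp only: mv_scale)
  then show ?thesis by (simp add: vec_eq_iff)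
qed

lemma rank_bound3:
  assumes sk: "skew C" and sp: "\<And>z. C *v z \<in> vec.span {a, b, c}"
  shows "rank C \<le> 3"
proof -
  have "rows C \<subseteq> vec.span {a, b, c}"
  proof
    fix r assume "r \<in> rows C"
    then obtain i where r: "r = row i C" by (auto simp: rows_def)
    have m: "C *v (- e i) = - (C *v e i)" by (rule mv_neg)
    have "\<forall>k. r $ k = (C *v (- e i)) $ k"
    proof
      fix k
      have 1: "r $ k = C $ i $ k" by (simp add: r row_def)
      have 2: "(C *v (- e i)) $ k = - (C $ k $ i)" by (simp add: m mv_e)
      show "r $ k = (C *v (- e i)) $ k"
        unfolding 1 2 by (rule skew_entry[OF sk])
    qed
    then have "r = C *v (- e i)" by (simp add: vec_eq_iff)
    then show "r \<in> vec.span {a, b, c}" using sp by simp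
  qed
  then have "vec.dim (rows C) \<le> card {a, b, c}" by (rule vec.dim_le_card) simp
  also have "\<dots> \<le> 3" by (simp add: card_insert_if)
  finally show ?thesis unfolding row_rank_def_gen .
qed

lemma wedge_sum_id:
  "(\<Sum>j\<in>UNIV. wedge (U *v e j) (V *v e j)) = U ** transpose V - V ** transpose U"
proof -
  have "\<And>a b. (\<Sum>j\<in>UNIV. wedge (U *v e j) (V *v e j)) $ a $ b
     = (\<Sum>j\<in>UNIV. U$a$j * V$b$j - V$a$j * U$b$j)"
    by (simp add: wedge_def mv_e)
  moreover have "\<And>a b. (U ** transpose V - V ** transpose U) $ a $ b
     = (\<Sum>j\<in>UNIV. U$a$j * V$b$j - V$a$j * U$b$j)"
    by (simp add: matrix_matrix_mult_def transpose_def sum_subtractf)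
  ultimately show ?thesis by (simp add: vec_eq_iff)
qed

lemma mv_sum: "(A::cmat6) *v sum f S = sum (\<lambda>i. A *v f i) S"
  by (induct S rule: infinite_finite_induct) (auto simp: matrix_vector_right_distrib)

lemma inH:
  fixes g gi :: cmat6
  assumes gi: "g ** gi = mat 1" and y: "(gi *v y) $ 5 = 0"
  shows "y \<in> vec.span ((\<lambda>j. g *v e j) ` {j. j \<noteq> 5})"
proof -
  let ?c = "gi *v y"
  have "y = g *v ?c" by (simp add: matrix_vector_mul_assoc gi)
  also have "\<dots> = g *v (\<Sum>j\<in>UNIV. ?c$j *s e j)" by (rule arg_cong[where f="(*v) g", OF vec6_expand])
  also have "\<dots> = (\<Sum>j\<in>UNIV. ?c$j *s (g *v e j))" unfolding mv_sum mv_scale ..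
  finally have yeq: "y = (\<Sum>j\<in>UNIV. ?c$j *s (g *v e j))" .
  have "(\<Sum>j\<in>UNIV. ?c$j *s (g *v e j)) \<in> vec.span ((\<lambda>j. g *v e j) ` {j. j \<noteq> 5})"
  proof (rule vec.span_sum)
    fix j :: 6
    show "?c$j *s (g *v e j) \<in> vec.span ((\<lambda>j. g *v e j) ` {j. j \<noteq> 5})"
    proof (cases "j = 5")
      case True then show ?thesis using y by (simp add: vec.span_zero)
    next
      case False then show ?thesis by (intro vec.span_scale vec.span_base) auto
    qed
  qed
  then show ?thesis using yeq by simp
qed

lemma dimH:
  fixes g gi :: cmat6
  assumes gi: "gi ** g = mat 1"
  shows "vec.dim (vec.span ((\<lambda>j. g *v e j) ` {j. j \<noteq> 5})) = 5"
proof -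
  let ?T = "(\<lambda>j. g *v e j) ` {j::6. j \<noteq> 5}"
  have J: "{j::6. j \<noteq> 5} = {0,1,2,3,4}" using exhaust_6 by auto
  have injg: "x = y" if "g *v x = g *v y" for x y
  proof -
    have "gi *v (g *v x) = gi *v (g *v y)" using that by simp
    then show ?thesis by (simp add: matrix_vector_mul_assoc gi)
  qed
  have inje: "i = j" if "e i = e j" for i j
  proof -
    have "e i $ i = e j $ i" using that by simp
    then show ?thesis by (simp add: e_comp split: if_splits)
  qed
  have inj: "inj_on (\<lambda>j. g *v e j) {j. j \<noteq> 5}"
    by (auto intro!: inj_onI dest!: injg inje)
  have "card ?T = card {j::6. j \<noteq> 5}" by (rule card_image[OF inj])
  also have "\<dots> = 5" unfolding J by simp
  finally have card: "card ?T = 5" .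
  have ind: "vec.independent ?T"
  proof (rule vec.independent_if_scalars_zero)
    show "finite ?T" by simp
    fix f x assume sum0: "(\<Sum>x\<in>?T. f x *s x) = 0" and xT: "x \<in> ?T"
    then obtain i where i: "i \<noteq> 5" "x = g *v e i" by auto
    have "(\<Sum>x\<in>?T. f x *s x) = (\<Sum>j\<in>{j. j \<noteq> 5}. f (g *v e j) *s (g *v e j))"
      by (simp add: sum.reindex[OF inj])
    also have "\<dots> = g *v (\<Sum>j\<in>{j. j \<noteq> 5}. f (g *v e j) *s e j)"
      unfolding mv_sum mv_scale ..
    finally have "g *v (\<Sum>j\<in>{j. j \<noteq> 5}. f (g *v e j) *s e j) = g *v 0"
      using sum0 by simp
    then have z: "(\<Sum>j\<in>{j. j \<noteq> 5}. f (g *v e j) *s e j) = 0"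
      by (rule injg)
    have "(\<Sum>j\<in>{j. j \<noteq> 5}. f (g *v e j) *s e j) $ i
        = (\<Sum>j\<in>{j. j \<noteq> 5}. if i = j then f (g *v e j) else 0)"
      unfolding sum_component by (intro sum.cong) (auto simp: e_comp)
    also have "\<dots> = f (g *v e i)" using i(1) by (subst sum.delta') auto
    finally show "f x = 0" using z i by simp
  qed
  show ?thesis using vec.dim_span_eq_card_independent[OF ind] card by simp
qed



theorem mainTheorem6:
  fixes A B C :: cmat6
  assumes skewA: "skew A" and skewB: "skew B" and skewC: "skew C"
    and rank4: "\<forall>a b c. (a, b, c) \<noteq> (0, 0, 0) \<longrightarrow>
                   rank (smat a A + smat b B + smat c C) = 4"
    and lines_special: "\<forall>P \<in> cspan {A, B, C}. \<forall>Q \<in> cspan {A, B, C}.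
                   (\<forall>a b. smat a P + smat b Q = 0 \<longrightarrow> a = 0 \<and> b = 0)
                   \<longrightarrow> special (cspan {P, Q})"
  shows "\<exists>H :: cvec6 set. vec.subspace H \<and> vec.dim H = 5 \<and> cspan {A, B, C} \<subseteq> wedge2 H"
proof -
  let ?S = "msp.span {A, B, C}"
  have AS: "A \<in> ?S" "B \<in> ?S" "C \<in> ?S" by (auto intro: msp.span_base)
  have indep: "a = 0 \<and> b = 0 \<and> c = 0" if "smat a A + smat b B + smat c C = 0" for a b c
  proof (rule ccontr)
    assume "\<not> (a = 0 \<and> b = 0 \<and> c = 0)"
    then have "(a, b, c) \<noteq> (0, 0, 0)" by auto
    then have "rank (smat a A + smat b B + smat c C) = 4" using rank4 by blast
    then show False using that rank_zero by simp
  qed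
  have rankC: "rank C = 4" using rank4[rule_format, of 0 0 1] by simp
  have specAB: "special (msp.span {A, B})"
  proof -
    have "\<forall>a b. smat a A + smat b B = 0 \<longrightarrow> a = 0 \<and> b = 0"
      using indep[of _ _ 0] by simp
    then show ?thesis using lines_special AS unfolding cspan_eq by blast
  qed
  obtain g where g: "invertible g"
    and img: "(\<lambda>X. g ** X ** transpose g) ` special_model = msp.span {A, B}"
    using specAB unfolding special_def by blast
  obtain gi where gi: "g ** gi = mat 1" "gi ** g = mat 1" using g unfolding invertible_def by blast
  define G where "G = transpose gi"
  have tgG: "transpose g ** G = mat 1"
    unfolding G_def matrix_transpose_mul[symmetric] gi(2) by simp
  have Gtg: "G ** transpose g = mat 1"
    unfolding G_def matrix_transpose_mul[symmetric] gi(1) by simp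
  define w where "w = G *v e 5"
  have ABw: "A *v w = 0" "B *v w = 0"
  proof -
    have "A \<in> (\<lambda>X. g ** X ** transpose g) ` special_model" "B \<in> (\<lambda>X. g ** X ** transpose g) ` special_model"
      using img by (simp_all add: msp.span_base)
    then show "A *v w = 0" "B *v w = 0"
      unfolding w_def using phi_kill[OF tgG] by auto
  qed
  have key: "\<exists>k. C *v (G *v u) = k *s (C *v w)"
    if Cw: "C *v w \<noteq> 0" and M: "M \<in> special_model" "M \<noteq> 0"
      and ker: "\<And>y. M *v y = 0 \<Longrightarrow> \<exists>a b. y = a *s e 5 + b *s u" for M u
  proof -
    define P where "P = g ** M ** transpose g"
    have PAB: "P \<in> msp.span {A, B}" using img M(1) P_def by blast
    then obtain \<alpha> \<beta> where "P - smat \<alpha> A = smat \<beta> B"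
      unfolding msp.span_insert[of A "{B}"] msp.span_singleton by auto
    then have Pab: "P = smat \<alpha> A + smat \<beta> B" by (simp add: diff_eq_eq add.commute)
    have Pnz: "P \<noteq> 0"
    proof
      assume P0: "P = 0"
      have "gi ** P ** G = (gi ** g) ** M ** (transpose g ** G)"
        unfolding P_def by (simp add: matrix_mul_assoc)
      also have "\<dots> = M" by (simp add: gi tgG)
      finally show False using P0 M(2) by simp
    qed
    have PS: "P \<in> ?S" using PAB msp.span_mono[of "{A,B}" "{A,B,C}"] by auto
    have indPC: "\<forall>a b. smat a P + smat b C = 0 \<longrightarrow> a = 0 \<and> b = 0"
    proof (intro allI impI)
      fix a b assume h: "smat a P + smat b C = 0"
      have "smat (a*\<alpha>) A + smat (a*\<beta>) B + smat b C = 0"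
        using h by (simp add: Pab msp.scale_right_distrib)
      then have ab: "a*\<alpha> = 0" "a*\<beta> = 0" "b = 0" using indep by blast+
      have "a = 0"
      proof (rule ccontr)
        assume "a \<noteq> 0"
        then have "\<alpha> = 0" "\<beta> = 0" using ab by auto
        then show False using Pnz Pab by simp
      qed
      then show "a = 0 \<and> b = 0" using ab by simp
    qed
    have "special (msp.span {P, C})"
      using lines_special PS AS(3) indPC unfolding cspan_eq by blast
    then obtain x where x: "x \<noteq> 0" "\<forall>X\<in>msp.span {P, C}. X *v x = 0"
      using special_kernel by blast
    then have Px: "P *v x = 0" and Cx: "C *v x = 0" by (auto intro: msp.span_base)
    define y where "y = transpose g *v x"
    have xy: "x = G *v y" unfolding y_def matrix_vector_mul_assoc Gtg matrix_vector_mul_lid ..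
    have "g *v (M *v y) = 0" using Px unfolding P_def y_def
      by (simp add: matrix_vector_mul_assoc matrix_mul_assoc del: transpose_matrix_vector)
    then have "gi *v (g *v (M *v y)) = 0" by simp
    then have My: "M *v y = 0" by (simp add: matrix_vector_mul_assoc matrix_mul_assoc gi(2))
    obtain a b where yab: "y = a *s e 5 + b *s u" using ker[OF My] by blast
    have "C *v x = a *s (C *v w) + b *s (C *v (G *v u))"
      unfolding xy yab w_def by (simp add: matrix_vector_right_distrib mv_scale)
    then have eq0: "a *s (C *v w) + b *s (C *v (G *v u)) = 0" using Cx by simp
    have bnz: "b \<noteq> 0"
    proof
      assume b0: "b = 0"
      then have "a *s (C *v w) = 0" using eq0 by simp
      then have "a = 0" using Cw by (simp add: vec.scale_eq_0_iff)
      then have "y = 0" using yab b0 by simp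
      then show False using xy x(1) by simp
    qed
    have "C *v (G *v u) = (- a / b) *s (C *v w)"
    proof -
      have "\<forall>i. (C *v (G *v u)) $ i = (- a / b) * (C *v w) $ i"
      proof
        fix i
        have "a * (C *v w) $ i + b * (C *v (G *v u)) $ i = 0"
          using arg_cong[OF eq0, of "\<lambda>v. v $ i"] by simp
        then show "(C *v (G *v u)) $ i = (- a / b) * (C *v w) $ i"
          using bnz by (simp add: field_simps add_eq_0_iff)
      qed
      then show ?thesis by (simp add: vec_eq_iff)
    qed
    then show ?thesis by blast
  qed
  have Cw: "C *v w = 0"
  proof (rule ccontr)
    assume Cw: "C *v w \<noteq> 0"
    have ker1: "\<And>y. M1 *v y = 0 \<Longrightarrow> \<exists>a b. y = a *s e 5 + b *s e 4" using M1_ker by blast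
    have ker2: "\<And>y. M2 *v y = 0 \<Longrightarrow> \<exists>a b. y = a *s e 5 + b *s e 3" using M2_ker by blast
    have ker3: "\<And>y. (M1 + M2) *v y = 0 \<Longrightarrow> \<exists>a b. y = a *s e 5 + b *s (e 2 - e 3 - e 4)"
      using M3_ker by blast
    obtain k4 where k4: "C *v (G *v e 4) = k4 *s (C *v w)"
      using key[OF Cw M_in(1) M_nz(1) ker1] by blast
    obtain k3 where k3: "C *v (G *v e 3) = k3 *s (C *v w)"
      using key[OF Cw M_in(2) M_nz(2) ker2] by blast
    obtain k2 where k2: "C *v (G *v (e 2 - e 3 - e 4)) = k2 *s (C *v w)"
      using key[OF Cw M_in(3) M_nz(3) ker3] by blast
    define col where "col j = C *v (G *v e j)" for j
    have c5: "col 5 = C *v w" by (simp add: col_def w_def)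
    have c4: "col 4 = k4 *s col 5" using k4 c5 col_def by simp
    have c3: "col 3 = k3 *s col 5" using k3 c5 col_def by simp
    have "col 2 - col 3 - col 4 = k2 *s col 5"
      using k2 c5 unfolding col_def by (simp add: matrix_vector_mult_diff_distrib)
    then have c2: "col 2 = (k2 + k3 + k4) *s col 5"
      unfolding c3 c4 by (simp add: vec_eq_iff algebra_simps)
    have sp: "C *v z \<in> vec.span {col 0, col 1, col 5}" for z
    proof -
      let ?c = "transpose g *v z"
      have "C *v z = C *v (G *v ?c)" unfolding matrix_vector_mul_assoc[of G] Gtg matrix_vector_mul_lid ..
      also have "\<dots> = C *v (G *v (\<Sum>j\<in>UNIV. ?c$j *s e j))"
        by (rule arg_cong[where f="\<lambda>v. C *v (G *v v)", OF vec6_expand])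
      also have "\<dots> = (\<Sum>j\<in>UNIV. ?c$j *s col j)"
        unfolding mv_sum mv_scale col_def ..
      finally have zeq: "C *v z = (\<Sum>j\<in>UNIV. ?c$j *s col j)" .
      have "(\<Sum>j\<in>UNIV. ?c$j *s col j) \<in> vec.span {col 0, col 1, col 5}"
      proof (rule vec.span_sum)
        fix j :: 6
        have base: "col 0 \<in> vec.span {col 0, col 1, col 5}" "col 1 \<in> vec.span {col 0, col 1, col 5}"
          "col 5 \<in> vec.span {col 0, col 1, col 5}" by (auto intro: vec.span_base)
        have s5: "\<And>k. k *s col 5 \<in> vec.span {col 0, col 1, col 5}"
          using vec.span_scale[OF base(3)] by blast
        have "col j \<in> vec.span {col 0, col 1, col 5}"
          using exhaust_6[of j]
          by (elim disjE) (simp_all only: c2 c3 c4 base s5)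
        then show "?c$j *s col j \<in> vec.span {col 0, col 1, col 5}"
          by (rule vec.span_scale)
      qed
      then show ?thesis using zeq by simp
    qed
    have "rank C \<le> 3" by (rule rank_bound3[OF skewC sp])
    with rankC show False by simp
  qed
  define H where "H = vec.span ((\<lambda>j. g *v e j) ` {j. j \<noteq> 5})"
  have subH: "vec.subspace H" unfolding H_def by (rule vec.subspace_span)
  have dimH5: "vec.dim H = 5" unfolding H_def by (rule dimH[OF gi(2)])
  have wcomp: "w $ m = gi $ 5 $ m" for m
    by (simp add: w_def mv_e G_def transpose_def)
  have inW: "X \<in> msp.span {wedge u v | u v. u \<in> H \<and> v \<in> H}"
    if sk: "skew X" and Xw: "X *v w = 0" for X
  proof -
    have row5: "(gi ** X) $ 5 $ k = 0" for k
    proof -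
      have e1: "(gi ** X)$5$k = (\<Sum>m\<in>UNIV. gi$5$m * X$m$k)" by (simp add: matrix_matrix_mult_def)
      have e2: "(\<Sum>m\<in>UNIV. gi$5$m * X$m$k) = (\<Sum>m\<in>UNIV. - (X$k$m * w$m))"
      proof (rule sum.cong[OF refl])
        fix m show "gi$5$m * X$m$k = - (X$k$m * w$m)"
          using skew_entry[OF sk, of m k] wcomp[of m] by simp
      qed
      have e3: "(X *v w)$k = (\<Sum>m\<in>UNIV. X$k$m * w$m)" by (simp add: matrix_vector_mult_def)
      show ?thesis using e1 e2 e3 Xw by (simp add: sum_negf)
    qed
    have imH: "X *v z \<in> H" for z
    proof -
      have "(gi *v (X *v z)) $ 5 = ((gi ** X) *v z) $ 5" by (simp add: matrix_vector_mul_assoc)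
      also have "\<dots> = 0" by (simp add: matrix_vector_mult_def row5)
      finally show ?thesis unfolding H_def by (rule inH[OF gi(1)])
    qed
    have "(\<Sum>j\<in>UNIV. wedge ((X ** G) *v e j) (g *v e j))
        = (X ** G) ** transpose g - g ** transpose (X ** G)" by (rule wedge_sum_id)
    also have "(X ** G) ** transpose g = X" by (simp add: matrix_mul_assoc[symmetric] Gtg)
    also have "g ** transpose (X ** G) = - X"
    proof -
      have "transpose (X ** G) = gi ** (- X)"
        using sk unfolding skew_def G_def by (simp add: matrix_transpose_mul)
      then show ?thesis by (simp add: matrix_mul_assoc gi(1))
    qed
    finally have sumeq: "(\<Sum>j\<in>UNIV. wedge ((X ** G) *v e j) (g *v e j)) = X + X" by simp
    have "X = smat (1/2) (X + X)" by (simp add: smat_def vec_eq_iff)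
    also have "\<dots> \<in> msp.span {wedge u v | u v. u \<in> H \<and> v \<in> H}"
      unfolding sumeq[symmetric]
    proof (intro msp.span_scale msp.span_sum)
      fix j :: 6
      show "wedge ((X ** G) *v e j) (g *v e j) \<in> msp.span {wedge u v | u v. u \<in> H \<and> v \<in> H}"
      proof (cases "j = 5")
        case True
        then have "(X ** G) *v e j = 0" using Xw by (simp add: matrix_vector_mul_assoc[symmetric] w_def)
        then have "wedge ((X ** G) *v e j) (g *v e j) = 0" by (simp add: wedge_def vec_eq_iff)
        then show ?thesis by (simp add: msp.span_zero)
      next
        case False
        have "(X ** G) *v e j \<in> H" using imH by (simp add: matrix_vector_mul_assoc[symmetric])
        moreover have "g *v e j \<in> H" unfolding H_def using False by (intro vec.span_base) auto
        ultimately show ?thesis by (intro msp.span_base) blast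
      qed
    qed
    finally show ?thesis .
  qed
  have "cspan {A, B, C} \<subseteq> wedge2 H"
    unfolding wedge2_def cspan_eq
  proof (rule msp.span_minimal)
    show "{A, B, C} \<subseteq> msp.span {wedge u v | u v. u \<in> H \<and> v \<in> H}"
      using inW[OF skewA ABw(1)] inW[OF skewB ABw(2)] inW[OF skewC Cw] by simp
    show "msp.subspace (msp.span {wedge u v | u v. u \<in> H \<and> v \<in> H})"
      by (rule msp.subspace_span)
  qed
  then show ?thesis using subH dimH5 by blast
qed

end
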